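(* Let $p$ be a prime and let $G\cong C_{p^2}\times C_p$ be the non-cyclic metacyclic abelian group of order $p^3$. Then there exist at least $p+1$ pairwise non-isomorphic local nearrings whose additive group is isomorphic to $G$.
   Context: A (left) nearring is a set $R$ with two binary operations $+$ and $\cdot$ such that $(R,+)$ is a group with neutral element $0$, $(R,\cdot)$ is a semigroup, and $x\cdot(y+z)=x\cdot y+x\cdot z$ for all $x,y,z\in R$. A nearring with identity is one where $(R,\cdot)$ is a monoid. A nearring $R$ with identity is called local if the set $L$ of all non-invertible elements of $(R,\cdot)$ is a subgroup of $(R,+)$. The additive group of $R$ is $(R,+)$. Two nearrings are isomorphic if there is a bijection preserving both operations. *)

theory Defs
  imports "HOL-Algebra.Algebra"
begin

definition nearring :: "('a, 'm) ring_scheme \<Rightarrow> bool" where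
  "nearring R \<longleftrightarrow>
     group (add_monoid R) \<and>
     (\<forall>x\<in>carrier R. \<forall>y\<in>carrier R. x \<otimes>\<^bsub>R\<^esub> y \<in> carrier R) \<and>
     (\<forall>x\<in>carrier R. \<forall>y\<in>carrier R. \<forall>z\<in>carrier R.
        (x \<otimes>\<^bsub>R\<^esub> y) \<otimes>\<^bsub>R\<^esub> z = x \<otimes>\<^bsub>R\<^esub> (y \<otimes>\<^bsub>R\<^esub> z)) \<and>
     (\<forall>x\<in>carrier R. \<forall>y\<in>carrier R. \<forall>z\<in>carrier R.
        x \<otimes>\<^bsub>R\<^esub> (y \<oplus>\<^bsub>R\<^esub> z) = x \<otimes>\<^bsub>R\<^esub> y \<oplus>\<^bsub>R\<^esub> x \<otimes>\<^bsub>R\<^esub> z)"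

definition nearring_1 :: "('a, 'm) ring_scheme \<Rightarrow> bool" where
  "nearring_1 R \<longleftrightarrow> nearring R \<and> monoid R"

definition local_nearring :: "('a, 'm) ring_scheme \<Rightarrow> bool" where
  "local_nearring R \<longleftrightarrow> nearring_1 R \<and>
     subgroup (carrier R - Units R) (add_monoid R)"

definition nearring_iso :: "('a, 'm) ring_scheme \<Rightarrow> ('b, 'n) ring_scheme \<Rightarrow> bool" where
  "nearring_iso R S \<longleftrightarrow> (\<exists>f. bij_betw f (carrier R) (carrier S) \<and>
     (\<forall>x\<in>carrier R. \<forall>y\<in>carrier R.
        f (x \<oplus>\<^bsub>R\<^esub> y) = f x \<oplus>\<^bsub>S\<^esub> f y \<and> f (x \<otimes>\<^bsub>R\<^esub> y) = f x \<otimes>\<^bsub>S\<^esub> f y))"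

end

theory Submission
  imports Defs "HOL-Number_Theory.Number_Theory"
begin

definition nrm :: "int \<Rightarrow> int \<times> int \<Rightarrow> int \<times> int" where
  "nrm P u = (fst u mod (P*P), snd u mod P)"

definition FF :: "int \<Rightarrow> int \<Rightarrow> nat \<Rightarrow> int \<times> int \<Rightarrow> int \<times> int \<Rightarrow> int \<times> int" where
  "FF P c e u v = (fst u * fst v + P*(c*snd u*snd v), snd u * fst v + fst u ^ e * snd v)"

definition NR :: "int \<Rightarrow> int \<Rightarrow> nat \<Rightarrow> (int \<times> int) ring" where
  "NR P c e = \<lparr>carrier = {0..<P*P} \<times> {0..<P}, monoid.mult = (\<lambda>u v. nrm P (FF P c e u v)),
     one = (1,0), ring.zero = (0,0), ring.add = (\<lambda>u v. nrm P (fst u + fst v, snd u + snd v))\<rparr>"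

definition eqv :: "int \<Rightarrow> int \<times> int \<Rightarrow> int \<times> int \<Rightarrow> bool" where
  "eqv P u v \<longleftrightarrow> [fst u = fst v] (mod P*P) \<and> [snd u = snd v] (mod P)"

lemma nrm_eq_iff: "nrm P u = nrm P v \<longleftrightarrow> eqv P u v"
  by (simp add: nrm_def eqv_def cong_def prod_eq_iff)

lemma eqv_nrm: "eqv P (nrm P u) u"
  by (simp add: nrm_def eqv_def cong_mod_left)

lemma eqv_refl: "eqv P u u"
  by (simp add: eqv_def)

lemma eqv_sym: "eqv P u v \<Longrightarrow> eqv P v u"
  by (simp add: eqv_def cong_sym)

lemma nrm_nrm: "nrm P (nrm P u) = nrm P u"
  using eqv_nrm nrm_eq_iff by blast

lemma cong_P2_P: "[x = y] (mod P*P) \<Longrightarrow> [x = y] (mod (P::int))"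
  by (erule cong_dvd_modulus) simp

lemma cong_P_scale: "[x = y] (mod P) \<Longrightarrow> [P*x = P*(y::int)] (mod P*P)"
  unfolding cong_def by (metis mult_mod_right)

lemma eqv_add: "eqv P u u' \<Longrightarrow> eqv P v v' \<Longrightarrow>
   eqv P (fst u + fst v, snd u + snd v) (fst u' + fst v', snd u' + snd v')"
  unfolding eqv_def fst_conv snd_conv by (metis cong_add)

lemma eqv_FF: "eqv P u u' \<Longrightarrow> eqv P v v' \<Longrightarrow> eqv P (FF P c e u v) (FF P c e u' v')"
proof -
  assume a: "eqv P u u'" and b: "eqv P v v'"
  have a1: "[fst u = fst u'] (mod P*P)" and a2: "[snd u = snd u'] (mod P)"
    using a unfolding eqv_def by (rule conjunct1, rule conjunct2)
  have b1: "[fst v = fst v'] (mod P*P)" and b2: "[snd v = snd v'] (mod P)"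
    using b unfolding eqv_def by (rule conjunct1, rule conjunct2)
  have a1': "[fst u = fst u'] (mod P)" and b1': "[fst v = fst v'] (mod P)"
    by (rule cong_P2_P[OF a1], rule cong_P2_P[OF b1])
  have "[c*snd u*snd v = c*snd u'*snd v'] (mod P)"
    using cong_mult[OF cong_mult[OF cong_refl[of c] a2] b2] .
  then have "[P*(c*snd u*snd v) = P*(c*snd u'*snd v')] (mod P*P)"
    by (rule cong_P_scale)
  then have f: "[fst u * fst v + P*(c*snd u*snd v) = fst u' * fst v' + P*(c*snd u'*snd v')] (mod P*P)"
    by (rule cong_add[OF cong_mult[OF a1 b1]])
  have s: "[snd u * fst v + fst u ^ e * snd v = snd u' * fst v' + fst u' ^ e * snd v'] (mod P)"
    using cong_add[OF cong_mult[OF a2 b1'] cong_mult[OF cong_pow[OF a1'] b2]] .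
  show ?thesis unfolding eqv_def FF_def fst_conv snd_conv using f s by (rule conjI)
qed

lemma nrm_in: "P > 0 \<Longrightarrow> nrm P u \<in> {0..<P*P} \<times> {0..<P}"
  by (simp add: nrm_def)

lemma nrm_id: "u \<in> {0..<P*P} \<times> {0..<P} \<Longrightarrow> nrm P u = u"
  by (auto simp: nrm_def)

lemma FF_assoc: "c = 0 \<or> e = 1 \<Longrightarrow> FF P c e (FF P c e u v) w = FF P c e u (FF P c e v w)"
  unfolding FF_def by (auto simp: algebra_simps power_mult_distrib)

lemma FF_distrib: "FF P c e u (fst v + fst w, snd v + snd w) =
   (fst (FF P c e u v) + fst (FF P c e u w), snd (FF P c e u v) + snd (FF P c e u w))"
  unfolding FF_def by (simp add: algebra_simps)

lemma NR_mult: "monoid.mult (NR P c e) u v = nrm P (FF P c e u v)"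
  by (simp add: NR_def)
lemma NR_add: "ring.add (NR P c e) u v = nrm P (fst u + fst v, snd u + snd v)"
  by (simp add: NR_def)
lemma NR_simps: "carrier (NR P c e) = {0..<P*P} \<times> {0..<P}" "one (NR P c e) = (1,0)"
   "ring.zero (NR P c e) = (0,0)"
  by (simp_all add: NR_def)

lemma NR_assoc: "c = 0 \<or> e = 1 \<Longrightarrow>
  monoid.mult (NR P c e) (monoid.mult (NR P c e) u v) w = monoid.mult (NR P c e) u (monoid.mult (NR P c e) v w)"
proof -
  assume h: "c = 0 \<or> e = 1"
  have "nrm P (FF P c e (nrm P (FF P c e u v)) w) = nrm P (FF P c e (FF P c e u v) w)"
    unfolding nrm_eq_iff by (rule eqv_FF[OF eqv_nrm eqv_refl])
  also have "\<dots> = nrm P (FF P c e u (FF P c e v w))" using FF_assoc[OF h] by simp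
  also have "\<dots> = nrm P (FF P c e u (nrm P (FF P c e v w)))"
    unfolding nrm_eq_iff by (rule eqv_FF[OF eqv_refl eqv_sym[OF eqv_nrm]])
  finally show ?thesis unfolding NR_mult .
qed

lemma NR_distrib:
  "monoid.mult (NR P c e) u (ring.add (NR P c e) v w) = ring.add (NR P c e) (monoid.mult (NR P c e) u v) (monoid.mult (NR P c e) u w)"
proof -
  have "nrm P (FF P c e u (nrm P (fst v + fst w, snd v + snd w))) = nrm P (FF P c e u (fst v + fst w, snd v + snd w))"
    unfolding nrm_eq_iff by (rule eqv_FF[OF eqv_refl eqv_nrm])
  also have "\<dots> = nrm P (fst (FF P c e u v) + fst (FF P c e u w), snd (FF P c e u v) + snd (FF P c e u w))"
    by (simp add: FF_distrib)
  also have "\<dots> = nrm P (fst (nrm P (FF P c e u v)) + fst (nrm P (FF P c e u w)),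
                       snd (nrm P (FF P c e u v)) + snd (nrm P (FF P c e u w)))"
    unfolding nrm_eq_iff
    by (rule eqv_add[OF eqv_sym[OF eqv_nrm] eqv_sym[OF eqv_nrm]])
  finally show ?thesis unfolding NR_mult NR_add .
qed

lemma add_monoid_NR: "p > 0 \<Longrightarrow>
  add_monoid (NR (int p) c e) = integer_mod_group (p^2) \<times>\<times> integer_mod_group p"
  unfolding DirProd_def integer_mod_group_def NR_def
  by (auto simp: fun_eq_iff nrm_def power2_eq_square split: prod.split)

lemma NR_closed: "P > 0 \<Longrightarrow> u \<in> carrier (NR P c e) \<Longrightarrow> v \<in> carrier (NR P c e) \<Longrightarrow>
   monoid.mult (NR P c e) u v \<in> carrier (NR P c e)"
  by (simp add: NR_mult NR_simps nrm_in)

lemma NR_monoid: "P > 1 \<Longrightarrow> c = 0 \<or> e = 1 \<Longrightarrow> monoid (NR P c e)"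
  apply (rule monoidI)
      apply (simp add: NR_closed)
     apply (simp add: NR_simps)
  using less_1_mult apply fastforce
    apply (metis NR_assoc)
   apply (simp add: NR_mult NR_simps FF_def nrm_id)
  apply (simp add: NR_mult NR_simps FF_def nrm_id)
  done

lemma NR_nearring: "p > 0 \<Longrightarrow> c = 0 \<or> e = 1 \<Longrightarrow> nearring (NR (int p) c e)"
  unfolding nearring_def
  apply (intro conjI)
     apply (simp only: add_monoid_NR)
     apply (simp add: DirProd_group)
    apply (simp add: NR_closed)
   apply (metis NR_assoc)
  apply (simp add: NR_distrib)
  done

lemma nrm_one: "P > 1 \<Longrightarrow> eqv P w (1,0) \<Longrightarrow> nrm P w = (1,0)"
proof -
  assume P: "P > 1" and h: "eqv P w (1,0)"
  have "nrm P w = nrm P (1,0)" using h by (simp only: nrm_eq_iff)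
  also have "\<dots> = (1,0)" using P by (simp add: nrm_def less_1_mult)
  finally show ?thesis .
qed

lemma unitI: "u \<in> carrier R \<Longrightarrow> v \<in> carrier R \<Longrightarrow> monoid.mult R u v = \<one>\<^bsub>R\<^esub> \<Longrightarrow>
   monoid.mult R v u = \<one>\<^bsub>R\<^esub> \<Longrightarrow> u \<in> Units R"
  unfolding Units_def by blast

lemma NR_nonunit:
  assumes P: "P > 1" and u: "u \<in> Units (NR P c e)"
  shows "\<not> P dvd fst u"
proof
  assume d: "P dvd fst u"
  from u obtain v where v: "v \<in> carrier (NR P c e)" "monoid.mult (NR P c e) u v = \<one>\<^bsub>NR P c e\<^esub>"
    unfolding Units_def by blast
  then have "fst (nrm P (FF P c e u v)) = 1" by (simp add: NR_simps NR_mult)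
  hence e1: "(fst u * fst v + P*(c*snd u*snd v)) mod (P*P) = 1" by (simp add: nrm_def FF_def)
  have "P dvd (fst u * fst v + P*(c*snd u*snd v))" using d by simp
  hence "P dvd (fst u * fst v + P*(c*snd u*snd v)) mod (P*P)" by (simp add: dvd_mod_iff)
  hence "P dvd 1" by (simp only: e1)
  thus False using P by simp
qed

lemma coprime_PP: "Factorial_Ring.prime (P::int) \<Longrightarrow> \<not> P dvd a \<Longrightarrow> coprime a (P*P)"
  by (metis coprime_commute coprime_mult_left_iff prime_imp_coprime)

lemma NR_unit_c0:
  assumes pr: "Factorial_Ring.prime (P::int)" and u: "u \<in> carrier (NR P 0 e)" and nd: "\<not> P dvd fst u"
  shows "u \<in> Units (NR P 0 e)"
proof -
  have P: "P > 1" using pr by (simp add: prime_gt_1_int)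
  obtain a b where ab: "u = (a,b)" by fastforce
  have "coprime a (P*P)" using coprime_PP[OF pr] nd ab by simp
  then obtain x0 where x0: "[a*x0 = 1] (mod P*P)" using cong_solve_coprime_int by blast
  define x where "x = x0 mod (P*P)"
  define y where "y = (-(b*x^Suc e)) mod P"
  have hx: "[x = x0] (mod P*P)" unfolding x_def by (rule cong_mod_leftI[OF cong_refl])
  have hy: "[y = -(b*x^Suc e)] (mod P)" unfolding y_def by (rule cong_mod_leftI[OF cong_refl])
  have h1: "[a*x = 1] (mod P*P)" by (rule cong_trans[OF cong_mult[OF cong_refl hx] x0])
  have h1': "[a*x = 1] (mod P)" by (rule cong_P2_P[OF h1])
  have "[(a*x)^e = 1^e] (mod P)" by (rule cong_pow[OF h1'])
  hence h2: "[(a*x)^e = 1] (mod P)" by (simp only: power_one)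
  have h1x: "[x*a = 1] (mod P*P)" using h1 by (simp only: mult.commute)
  have s1: "[b*x + a^e*y = 0] (mod P)"
  proof -
    have "[b*x + a^e*y = b*x + a^e*(-(b*x^Suc e))] (mod P)"
      by (rule cong_add[OF cong_refl cong_mult[OF cong_refl hy]])
    also have "b*x + a^e*(-(b*x^Suc e)) = b*x - b*x*(a*x)^e"
      by (simp add: power_mult_distrib algebra_simps)
    also have "[b*x - b*x*(a*x)^e = b*x - b*x*1] (mod P)"
      by (rule cong_diff[OF cong_refl cong_mult[OF cong_refl h2]])
    also have "b*x - b*x*1 = 0" by simp
    finally show ?thesis .
  qed
  have s2: "[y*a + x^e*b = 0] (mod P)"
  proof -
    have "[y*a + x^e*b = (-(b*x^Suc e))*a + x^e*b] (mod P)"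
      by (rule cong_add[OF cong_mult[OF hy cong_refl] cong_refl])
    also have "(-(b*x^Suc e))*a + x^e*b = x^e*b - x^e*b*(a*x)"
      by (simp add: algebra_simps)
    also have "[x^e*b - x^e*b*(a*x) = x^e*b - x^e*b*1] (mod P)"
      by (rule cong_diff[OF cong_refl cong_mult[OF cong_refl h1']])
    also have "x^e*b - x^e*b*1 = 0" by simp
    finally show ?thesis .
  qed
  have v: "(x,y) \<in> carrier (NR P 0 e)" using P unfolding x_def y_def NR_simps by simp
  have "FF P 0 e (a,b) (x,y) = (a*x, b*x + a^e*y)" by (simp add: FF_def)
  hence m1: "monoid.mult (NR P 0 e) u (x,y) = \<one>\<^bsub>NR P 0 e\<^esub>"
    unfolding NR_mult NR_simps ab using nrm_one[OF P] h1 s1 by (simp add: eqv_def)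
  have "FF P 0 e (x,y) (a,b) = (x*a, y*a + x^e*b)" by (simp add: FF_def)
  hence m2: "monoid.mult (NR P 0 e) (x,y) u = \<one>\<^bsub>NR P 0 e\<^esub>"
    unfolding NR_mult NR_simps ab using nrm_one[OF P] h1x s2 by (simp add: eqv_def)
  show ?thesis by (rule unitI[OF u v m1 m2])
qed

lemma NR_unit_e1:
  assumes pr: "Factorial_Ring.prime (P::int)" and u: "u \<in> carrier (NR P c 1)" and nd: "\<not> P dvd fst u"
  shows "u \<in> Units (NR P c 1)"
proof -
  have P: "P > 1" using pr by (simp add: prime_gt_1_int)
  obtain a b where ab: "u = (a,b)" by fastforce
  define d where "d = a*a - P*(c*b*b)"
  have "\<not> P dvd d"
  proof
    assume "P dvd d"
    hence "P dvd d + P*(c*b*b)" by simp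
    hence "P dvd a*a" unfolding d_def by simp
    hence "P dvd a" using pr prime_dvd_mult_iff by blast
    thus False using nd ab by simp
  qed
  hence "coprime d (P*P)" using coprime_PP[OF pr] by simp
  then obtain w0 where w0: "[d*w0 = 1] (mod P*P)" using cong_solve_coprime_int by blast
  define x where "x = (a*w0) mod (P*P)"
  define y where "y = (-(b*w0)) mod P"
  have hx: "[x = a*w0] (mod P*P)" unfolding x_def by (rule cong_mod_leftI[OF cong_refl])
  have hx': "[x = a*w0] (mod P)" by (rule cong_P2_P[OF hx])
  have hy: "[y = -(b*w0)] (mod P)" unfolding y_def by (rule cong_mod_leftI[OF cong_refl])
  have f1: "[a*x + P*(c*b*y) = 1] (mod P*P)"
  proof -
    have "[a*x + P*(c*b*y) = a*(a*w0) + P*(c*b*(-(b*w0)))] (mod P*P)"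
      by (rule cong_add[OF cong_mult[OF cong_refl hx] cong_P_scale[OF cong_mult[OF cong_refl hy]]])
    also have "a*(a*w0) + P*(c*b*(-(b*w0))) = d*w0" unfolding d_def by (simp add: algebra_simps)
    finally show ?thesis using w0 by (rule cong_trans)
  qed
  have f2: "[x*a + P*(c*y*b) = 1] (mod P*P)"
  proof -
    have "[x*a + P*(c*y*b) = (a*w0)*a + P*(c*(-(b*w0))*b)] (mod P*P)"
      by (rule cong_add[OF cong_mult[OF hx cong_refl] cong_P_scale[OF cong_mult[OF cong_mult[OF cong_refl hy] cong_refl]]])
    also have "(a*w0)*a + P*(c*(-(b*w0))*b) = d*w0" unfolding d_def by (simp add: algebra_simps)
    finally show ?thesis using w0 by (rule cong_trans)
  qed
  have s1: "[b*x + a^1*y = 0] (mod P)"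
  proof -
    have "[b*x + a^1*y = b*(a*w0) + a^1*(-(b*w0))] (mod P)"
      by (rule cong_add[OF cong_mult[OF cong_refl hx'] cong_mult[OF cong_refl hy]])
    also have "b*(a*w0) + a^1*(-(b*w0)) = 0" by (simp add: algebra_simps)
    finally show ?thesis .
  qed
  have s2: "[y*a + x^1*b = 0] (mod P)"
  proof -
    have "[y*a + x^1*b = (-(b*w0))*a + (a*w0)^1*b] (mod P)"
      by (rule cong_add[OF cong_mult[OF hy cong_refl] cong_mult[OF cong_pow[OF hx'] cong_refl]])
    also have "(-(b*w0))*a + (a*w0)^1*b = 0" by (simp add: algebra_simps)
    finally show ?thesis .
  qed
  have v: "(x,y) \<in> carrier (NR P c 1)" using P unfolding x_def y_def NR_simps by simp
  have m1: "monoid.mult (NR P c 1) u (x,y) = \<one>\<^bsub>NR P c 1\<^esub>"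
    unfolding NR_mult NR_simps ab FF_def using nrm_one[OF P] f1 s1 by (simp add: eqv_def)
  have m2: "monoid.mult (NR P c 1) (x,y) u = \<one>\<^bsub>NR P c 1\<^esub>"
    unfolding NR_mult NR_simps ab FF_def using nrm_one[OF P] f2 s2 by (simp add: eqv_def)
  show ?thesis by (rule unitI[OF u v m1 m2])
qed

lemma NR_Units:
  assumes pr: "Factorial_Ring.prime (P::int)" and ce: "c = 0 \<or> e = 1"
  shows "Units (NR P c e) = {u \<in> carrier (NR P c e). \<not> P dvd fst u}"
proof -
  have P: "P > 1" using pr by (simp add: prime_gt_1_int)
  have "Units (NR P c e) \<subseteq> carrier (NR P c e)" unfolding Units_def by blast
  moreover have "u \<in> Units (NR P c e)" if "u \<in> carrier (NR P c e)" "\<not> P dvd fst u" for u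
    using ce NR_unit_c0[OF pr] NR_unit_e1[OF pr] that by blast
  ultimately show ?thesis using NR_nonunit[OF P] by blast
qed

lemma NR_L:
  assumes pr: "Factorial_Ring.prime (P::int)" and ce: "c = 0 \<or> e = 1"
  shows "carrier (NR P c e) - Units (NR P c e) = {u \<in> carrier (NR P c e). P dvd fst u}"
  using NR_Units[OF pr ce] by blast

lemma prime_int_of_nat: "Factorial_Ring.prime (p::nat) \<Longrightarrow> Factorial_Ring.prime (int p)"
  by simp

lemma NR_subgroup:
  assumes pr: "Factorial_Ring.prime (p::nat)"
  shows "subgroup {u \<in> carrier (NR (int p) c e). int p dvd fst u} (add_monoid (NR (int p) c e))"
proof -
  have p0: "p > 0" using pr prime_gt_0_nat by blast
  have gr: "group (integer_mod_group (p^2) \<times>\<times> integer_mod_group p)" by (simp add: DirProd_group)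
  have car: "carrier (integer_mod_group (p^2) \<times>\<times> integer_mod_group p) = {0..<int p * int p} \<times> {0..<int p}"
    using p0 by (simp add: DirProd_def carrier_integer_mod_group power2_eq_square)
  show ?thesis unfolding add_monoid_NR[OF p0]
  proof (rule group.subgroupI[OF gr])
    show "{u \<in> carrier (NR (int p) c e). int p dvd fst u} \<subseteq> carrier (integer_mod_group (p^2) \<times>\<times> integer_mod_group p)"
      unfolding car NR_simps by blast
    show "{u \<in> carrier (NR (int p) c e). int p dvd fst u} \<noteq> {}"
    proof -
      have "(0,0) \<in> {u \<in> carrier (NR (int p) c e). int p dvd fst u}"
        using p0 unfolding NR_simps by simp
      thus ?thesis by blast
    qed
  next
    fix a assume a: "a \<in> {u \<in> carrier (NR (int p) c e). int p dvd fst u}"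
    obtain g h where gh: "a = (g,h)" by fastforce
    have g: "g \<in> carrier (integer_mod_group (p^2))" and h: "h \<in> carrier (integer_mod_group p)"
      using a gh p0 by (auto simp: NR_simps carrier_integer_mod_group power2_eq_square)
    have "inv\<^bsub>integer_mod_group (p^2) \<times>\<times> integer_mod_group p\<^esub> a = ((-g) mod int (p^2), (-h) mod int p)"
      unfolding gh by (simp add: inv_DirProd g h)
    moreover have "int p dvd (-g) mod int (p^2)"
      using a gh by (simp add: dvd_mod_iff power2_eq_square)
    ultimately show "inv\<^bsub>integer_mod_group (p^2) \<times>\<times> integer_mod_group p\<^esub> a \<in> {u \<in> carrier (NR (int p) c e). int p dvd fst u}"
      using p0 by (simp add: NR_simps power2_eq_square)
  next
    fix a b assume a: "a \<in> {u \<in> carrier (NR (int p) c e). int p dvd fst u}"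
      and b: "b \<in> {u \<in> carrier (NR (int p) c e). int p dvd fst u}"
    have "int p dvd (fst a + fst b) mod int (p^2)"
      using a b by (simp add: dvd_mod_iff power2_eq_square)
    then show "a \<otimes>\<^bsub>integer_mod_group (p^2) \<times>\<times> integer_mod_group p\<^esub> b \<in> {u \<in> carrier (NR (int p) c e). int p dvd fst u}"
      using p0 by (auto simp: NR_simps DirProd_def power2_eq_square split: prod.split)
  qed
qed

lemma NR_local:
  assumes pr: "Factorial_Ring.prime (p::nat)" and ce: "c = 0 \<or> e = 1"
  shows "local_nearring (NR (int p) c e)"
proof -
  have p0: "p > 0" using pr prime_gt_0_nat by blast
  have pr': "Factorial_Ring.prime (int p)" using pr by simp
  have "int p > 1" using pr prime_gt_1_nat by simp
  then show ?thesis
    unfolding local_nearring_def nearring_1_def NR_L[OF pr' ce]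
    using NR_nearring[OF p0 ce] NR_monoid[OF _ ce] NR_subgroup[OF pr] by blast
qed

definition Lset :: "('a, 'm) ring_scheme \<Rightarrow> 'a set" where
  "Lset R = carrier R - Units R"

definition inPR :: "('a, 'm) ring_scheme \<Rightarrow> nat \<Rightarrow> 'a \<Rightarrow> bool" where
  "inPR R k w \<longleftrightarrow> (\<exists>x\<in>carrier R. w = x [^]\<^bsub>add_monoid R\<^esub> k)"

definition Zp :: "('a, 'm) ring_scheme \<Rightarrow> bool" where
  "Zp R \<longleftrightarrow> (\<forall>a\<in>Lset R. \<forall>b\<in>Lset R. a \<otimes>\<^bsub>R\<^esub> b = \<zero>\<^bsub>R\<^esub>)"

definition Qp :: "('a, 'm) ring_scheme \<Rightarrow> nat \<Rightarrow> bool" where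
  "Qp R k \<longleftrightarrow> (\<forall>a\<in>Lset R. \<forall>b\<in>Lset R. inPR R k (a \<otimes>\<^bsub>R\<^esub> b))"

definition Phi :: "('a, 'm) ring_scheme \<Rightarrow> nat \<Rightarrow> nat \<Rightarrow> bool" where
  "Phi R k j \<longleftrightarrow> (\<forall>u\<in>Units R. \<forall>n\<in>Lset R. \<exists>w. inPR R k w \<and>
      u \<otimes>\<^bsub>R\<^esub> n = (n \<otimes>\<^bsub>R\<^esub> (u [^]\<^bsub>R\<^esub> j)) \<oplus>\<^bsub>R\<^esub> w)"

lemma nearring_iso_sym:
  assumes R: "nearring_1 R" and iso: "nearring_iso R S"
  shows "nearring_iso S R"
proof -
  have gR: "group (add_monoid R)" and mR: "monoid R" using R unfolding nearring_1_def nearring_def by auto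
  obtain f where bij: "bij_betw f (carrier R) (carrier S)" and
    hom: "\<And>x y. x \<in> carrier R \<Longrightarrow> y \<in> carrier R \<Longrightarrow>
       f (x \<oplus>\<^bsub>R\<^esub> y) = f x \<oplus>\<^bsub>S\<^esub> f y \<and> f (x \<otimes>\<^bsub>R\<^esub> y) = f x \<otimes>\<^bsub>S\<^esub> f y"
    using iso unfolding nearring_iso_def by blast
  define g where "g = inv_into (carrier R) f"
  have bg: "bij_betw g (carrier S) (carrier R)" unfolding g_def by (rule bij_betw_inv_into[OF bij])
  have inj: "inj_on f (carrier R)" using bij unfolding bij_betw_def by (rule conjunct1)
  have fg: "\<And>x. x \<in> carrier S \<Longrightarrow> f (g x) = x" unfolding g_def
    by (rule bij_betw_inv_into_right[OF bij])
  have gin: "\<And>x. x \<in> carrier S \<Longrightarrow> g x \<in> carrier R" by (rule bij_betw_apply[OF bg])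
  have gf: "\<And>x. x \<in> carrier R \<Longrightarrow> g (f x) = x" unfolding g_def by (rule inv_into_f_f[OF inj])
  have addc: "x \<oplus>\<^bsub>R\<^esub> y \<in> carrier R" if x: "x \<in> carrier R" and y: "y \<in> carrier R" for x y
  proof -
    have "x \<otimes>\<^bsub>add_monoid R\<^esub> y \<in> carrier (add_monoid R)"
      by (rule monoid.m_closed[OF group.is_monoid[OF gR]]) (simp_all only: partial_object.simps x y)
    thus ?thesis by simp
  qed
  have mulc: "x \<otimes>\<^bsub>R\<^esub> y \<in> carrier R" if x: "x \<in> carrier R" and y: "y \<in> carrier R" for x y
    by (rule monoid.m_closed[OF mR x y])
  have "\<forall>x\<in>carrier S. \<forall>y\<in>carrier S.
        g (x \<oplus>\<^bsub>S\<^esub> y) = g x \<oplus>\<^bsub>R\<^esub> g y \<and> g (x \<otimes>\<^bsub>S\<^esub> y) = g x \<otimes>\<^bsub>R\<^esub> g y"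
  proof (intro ballI conjI)
    fix x y assume x: "x \<in> carrier S" and y: "y \<in> carrier S"
    have h: "f (g x \<oplus>\<^bsub>R\<^esub> g y) = f (g x) \<oplus>\<^bsub>S\<^esub> f (g y)"
      "f (g x \<otimes>\<^bsub>R\<^esub> g y) = f (g x) \<otimes>\<^bsub>S\<^esub> f (g y)"
      using hom[OF gin[OF x] gin[OF y]] by auto
    have "x \<oplus>\<^bsub>S\<^esub> y = f (g x \<oplus>\<^bsub>R\<^esub> g y)" unfolding h fg[OF x] fg[OF y] ..
    hence "g (x \<oplus>\<^bsub>S\<^esub> y) = g (f (g x \<oplus>\<^bsub>R\<^esub> g y))" by (rule arg_cong)
    thus "g (x \<oplus>\<^bsub>S\<^esub> y) = g x \<oplus>\<^bsub>R\<^esub> g y" using gf[OF addc[OF gin[OF x] gin[OF y]]] by simp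
    have "x \<otimes>\<^bsub>S\<^esub> y = f (g x \<otimes>\<^bsub>R\<^esub> g y)" unfolding h fg[OF x] fg[OF y] ..
    hence "g (x \<otimes>\<^bsub>S\<^esub> y) = g (f (g x \<otimes>\<^bsub>R\<^esub> g y))" by (rule arg_cong)
    thus "g (x \<otimes>\<^bsub>S\<^esub> y) = g x \<otimes>\<^bsub>R\<^esub> g y" using gf[OF mulc[OF gin[OF x] gin[OF y]]] by simp
  qed
  thus ?thesis unfolding nearring_iso_def using bg by blast
qed

context
  fixes R :: "('a, 'm) ring_scheme" and S :: "('b, 'n) ring_scheme" and f
  assumes R: "nearring_1 R" and S: "nearring_1 S"
    and bij: "bij_betw f (carrier R) (carrier S)"
    and hom: "\<And>x y. x \<in> carrier R \<Longrightarrow> y \<in> carrier R \<Longrightarrow>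
       f (x \<oplus>\<^bsub>R\<^esub> y) = f x \<oplus>\<^bsub>S\<^esub> f y \<and> f (x \<otimes>\<^bsub>R\<^esub> y) = f x \<otimes>\<^bsub>S\<^esub> f y"
begin

lemma tr_basic: "group (add_monoid R)" "monoid R" "group (add_monoid S)" "monoid S"
  using R S unfolding nearring_1_def nearring_def by auto

lemma tr_in: "x \<in> carrier R \<Longrightarrow> f x \<in> carrier S"
  by (rule bij_betw_apply[OF bij])

lemma tr_surj: "y \<in> carrier S \<Longrightarrow> \<exists>x\<in>carrier R. y = f x"
proof -
  assume "y \<in> carrier S"
  hence "y \<in> f ` carrier R" using bij_betw_imp_surj_on[OF bij] by simp
  thus ?thesis by (rule imageE) blast
qed

lemma tr_inj: "x \<in> carrier R \<Longrightarrow> y \<in> carrier R \<Longrightarrow> f x = f y \<Longrightarrow> x = y"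
  by (rule inj_onD[OF bij_betw_imp_inj_on[OF bij]])

lemma tr_mulc: "x \<in> carrier R \<Longrightarrow> y \<in> carrier R \<Longrightarrow> x \<otimes>\<^bsub>R\<^esub> y \<in> carrier R"
  using tr_basic(2) monoid.m_closed by fastforce

lemma tr_one: "f \<one>\<^bsub>R\<^esub> = \<one>\<^bsub>S\<^esub>"
proof (rule monoid.one_unique[OF tr_basic(4)])
  show "f \<one>\<^bsub>R\<^esub> \<in> carrier S" using tr_in monoid.one_closed[OF tr_basic(2)] by blast
  fix y assume "y \<in> carrier S"
  then obtain x where x: "x \<in> carrier R" "y = f x" using tr_surj by blast
  have "f \<one>\<^bsub>R\<^esub> \<otimes>\<^bsub>S\<^esub> f x = f (\<one>\<^bsub>R\<^esub> \<otimes>\<^bsub>R\<^esub> x)"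
    using hom[OF monoid.one_closed[OF tr_basic(2)] x(1)] by simp
  also have "\<dots> = f x" using monoid.l_one[OF tr_basic(2) x(1)] by simp
  finally show "f \<one>\<^bsub>R\<^esub> \<otimes>\<^bsub>S\<^esub> y = y" using x by simp
qed

lemma tr_zero: "f \<zero>\<^bsub>R\<^esub> = \<zero>\<^bsub>S\<^esub>"
proof -
  have z: "\<zero>\<^bsub>R\<^esub> \<in> carrier R" using monoid.one_closed[OF group.is_monoid[OF tr_basic(1)]] by simp
  have zz: "\<zero>\<^bsub>R\<^esub> \<oplus>\<^bsub>R\<^esub> \<zero>\<^bsub>R\<^esub> = \<zero>\<^bsub>R\<^esub>"
    using monoid.l_one[OF group.is_monoid[OF tr_basic(1)]] z by fastforce
  have "f \<zero>\<^bsub>R\<^esub> \<oplus>\<^bsub>S\<^esub> f \<zero>\<^bsub>R\<^esub> = f \<zero>\<^bsub>R\<^esub>"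
    using hom[OF z z] zz by simp
  moreover have "f \<zero>\<^bsub>R\<^esub> \<in> carrier S" using tr_in z by blast
  ultimately show ?thesis
    using group.l_cancel_one[OF tr_basic(3), of "f \<zero>\<^bsub>R\<^esub>" "f \<zero>\<^bsub>R\<^esub>"] by simp
qed

lemma tr_units: "x \<in> carrier R \<Longrightarrow> f x \<in> Units S \<longleftrightarrow> x \<in> Units R"
proof
  assume x: "x \<in> carrier R" and "f x \<in> Units S"
  then obtain z where z: "z \<in> carrier S" "z \<otimes>\<^bsub>S\<^esub> f x = \<one>\<^bsub>S\<^esub>" "f x \<otimes>\<^bsub>S\<^esub> z = \<one>\<^bsub>S\<^esub>"
    unfolding Units_def by blast
  then obtain y where y: "y \<in> carrier R" "z = f y" using tr_surj by blast
  have o: "\<one>\<^bsub>R\<^esub> \<in> carrier R" using monoid.one_closed[OF tr_basic(2)] .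
  have "f (y \<otimes>\<^bsub>R\<^esub> x) = f \<one>\<^bsub>R\<^esub>" using hom[OF y(1) x] z y tr_one by simp
  hence 1: "y \<otimes>\<^bsub>R\<^esub> x = \<one>\<^bsub>R\<^esub>" using tr_inj tr_mulc[OF y(1) x] o by blast
  have "f (x \<otimes>\<^bsub>R\<^esub> y) = f \<one>\<^bsub>R\<^esub>" using hom[OF x y(1)] z y tr_one by simp
  hence 2: "x \<otimes>\<^bsub>R\<^esub> y = \<one>\<^bsub>R\<^esub>" using tr_inj tr_mulc[OF x y(1)] o by blast
  show "x \<in> Units R" using 1 2 x y unfolding Units_def by blast
next
  assume x: "x \<in> carrier R" and "x \<in> Units R"
  then obtain y where y: "y \<in> carrier R" "y \<otimes>\<^bsub>R\<^esub> x = \<one>\<^bsub>R\<^esub>" "x \<otimes>\<^bsub>R\<^esub> y = \<one>\<^bsub>R\<^esub>"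
    unfolding Units_def by blast
  have "f y \<otimes>\<^bsub>S\<^esub> f x = \<one>\<^bsub>S\<^esub>" "f x \<otimes>\<^bsub>S\<^esub> f y = \<one>\<^bsub>S\<^esub>"
    using hom[OF y(1) x] hom[OF x y(1)] y tr_one by auto
  thus "f x \<in> Units S" using tr_in[OF x] tr_in[OF y(1)] unfolding Units_def by blast
qed

lemma tr_L: "x \<in> carrier R \<Longrightarrow> f x \<in> Lset S \<longleftrightarrow> x \<in> Lset R"
  unfolding Lset_def using tr_units tr_in by blast

lemma tr_pow: "x \<in> carrier R \<Longrightarrow> f (x [^]\<^bsub>R\<^esub> (j::nat)) = f x [^]\<^bsub>S\<^esub> j"
proof (induction j)
  case 0
  then show ?case using tr_one by simp
next
  case (Suc j)
  have "x [^]\<^bsub>R\<^esub> j \<in> carrier R" using monoid.nat_pow_closed[OF tr_basic(2) Suc.prems] .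
  then show ?case using Suc hom[of "x [^]\<^bsub>R\<^esub> j" x] by simp
qed

lemma tr_apow: "x \<in> carrier R \<Longrightarrow>
   f (x [^]\<^bsub>add_monoid R\<^esub> (k::nat)) = f x [^]\<^bsub>add_monoid S\<^esub> k"
proof (induction k)
  case 0
  then show ?case using tr_zero by simp
next
  case (Suc k)
  have "x [^]\<^bsub>add_monoid R\<^esub> k \<in> carrier R"
    using monoid.nat_pow_closed[OF group.is_monoid[OF tr_basic(1)]] Suc.prems by fastforce
  then show ?case using Suc hom[of "x [^]\<^bsub>add_monoid R\<^esub> k" x] by simp
qed

lemma tr_PR: "inPR R k w \<Longrightarrow> inPR S k (f w)"
  unfolding inPR_def using tr_apow tr_in by blast

lemma tr_PR_in: "inPR R k w \<Longrightarrow> w \<in> carrier R"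
  unfolding inPR_def
  using monoid.nat_pow_closed[OF group.is_monoid[OF tr_basic(1)]] by fastforce

lemma tr_Zp: "Zp R \<Longrightarrow> Zp S"
  unfolding Zp_def
proof (intro ballI)
  assume Z: "\<forall>a\<in>Lset R. \<forall>b\<in>Lset R. a \<otimes>\<^bsub>R\<^esub> b = \<zero>\<^bsub>R\<^esub>"
  fix a b assume a: "a \<in> Lset S" and b: "b \<in> Lset S"
  obtain x where x: "x \<in> carrier R" "a = f x" using tr_surj a unfolding Lset_def by blast
  obtain y where y: "y \<in> carrier R" "b = f y" using tr_surj b unfolding Lset_def by blast
  have "x \<in> Lset R" "y \<in> Lset R" using tr_L x y a b by blast+
  then show "a \<otimes>\<^bsub>S\<^esub> b = \<zero>\<^bsub>S\<^esub>" using Z hom[OF x(1) y(1)] x y tr_zero by simp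
qed

lemma tr_Qp: "Qp R k \<Longrightarrow> Qp S k"
  unfolding Qp_def
proof (intro ballI)
  assume Z: "\<forall>a\<in>Lset R. \<forall>b\<in>Lset R. inPR R k (a \<otimes>\<^bsub>R\<^esub> b)"
  fix a b assume a: "a \<in> Lset S" and b: "b \<in> Lset S"
  obtain x where x: "x \<in> carrier R" "a = f x" using tr_surj a unfolding Lset_def by blast
  obtain y where y: "y \<in> carrier R" "b = f y" using tr_surj b unfolding Lset_def by blast
  have "x \<in> Lset R" "y \<in> Lset R" using tr_L x y a b by blast+
  then have "inPR S k (f (x \<otimes>\<^bsub>R\<^esub> y))" using Z tr_PR by blast
  then show "inPR S k (a \<otimes>\<^bsub>S\<^esub> b)" using hom[OF x(1) y(1)] x y by simp
qed

lemma tr_Phi: "Phi R k j \<Longrightarrow> Phi S k j"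
  unfolding Phi_def
proof (intro ballI)
  assume Z: "\<forall>u\<in>Units R. \<forall>n\<in>Lset R. \<exists>w. inPR R k w \<and>
      u \<otimes>\<^bsub>R\<^esub> n = (n \<otimes>\<^bsub>R\<^esub> (u [^]\<^bsub>R\<^esub> j)) \<oplus>\<^bsub>R\<^esub> w"
  fix a b assume a: "a \<in> Units S" and b: "b \<in> Lset S"
  obtain x where x: "x \<in> carrier R" "a = f x" using tr_surj a unfolding Units_def by blast
  obtain y where y: "y \<in> carrier R" "b = f y" using tr_surj b unfolding Lset_def by blast
  have xu: "x \<in> Units R" using tr_units x a by blast
  have yl: "y \<in> Lset R" using tr_L y b by blast
  obtain w where w: "inPR R k w" "x \<otimes>\<^bsub>R\<^esub> y = (y \<otimes>\<^bsub>R\<^esub> (x [^]\<^bsub>R\<^esub> j)) \<oplus>\<^bsub>R\<^esub> w"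
    using Z xu yl by blast
  have xp: "x [^]\<^bsub>R\<^esub> j \<in> carrier R" using monoid.nat_pow_closed[OF tr_basic(2) x(1)] .
  have yx: "y \<otimes>\<^bsub>R\<^esub> (x [^]\<^bsub>R\<^esub> j) \<in> carrier R" using tr_mulc[OF y(1) xp] .
  have "f (x \<otimes>\<^bsub>R\<^esub> y) = (f y \<otimes>\<^bsub>S\<^esub> (f x [^]\<^bsub>S\<^esub> j)) \<oplus>\<^bsub>S\<^esub> f w"
    using w(2) hom[OF yx tr_PR_in[OF w(1)]] hom[OF y(1) xp] tr_pow[OF x(1)] by simp
  then show "\<exists>w. inPR S k w \<and> a \<otimes>\<^bsub>S\<^esub> b = (b \<otimes>\<^bsub>S\<^esub> (a [^]\<^bsub>S\<^esub> j)) \<oplus>\<^bsub>S\<^esub> w"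
    using hom[OF x(1) y(1)] x y tr_PR[OF w(1)] by auto
qed

end

lemma NR_apow: "x [^]\<^bsub>add_monoid (NR P c e)\<^esub> (k::nat) = nrm P (int k * fst x, int k * snd x)"
proof (induction k)
  case 0
  then show ?case by (simp add: NR_simps nrm_def)
next
  case (Suc k)
  have "x [^]\<^bsub>add_monoid (NR P c e)\<^esub> Suc k =
        nrm P (fst (nrm P (int k * fst x, int k * snd x)) + fst x, snd (nrm P (int k * fst x, int k * snd x)) + snd x)"
    by (subst nat_pow_Suc, subst Suc.IH) (simp add: NR_add)
  also have "\<dots> = nrm P (int k * fst x + fst x, int k * snd x + snd x)"
    unfolding nrm_eq_iff using eqv_add[OF eqv_nrm[of P "(int k * fst x, int k * snd x)"] eqv_refl[of P x]] by simp
  also have "\<dots> = nrm P (int (Suc k) * fst x, int (Suc k) * snd x)" by (simp add: algebra_simps)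
  finally show ?case .
qed

lemma PR_snd: "inPR (NR (int p) c e) p w \<Longrightarrow> snd w = 0"
  unfolding inPR_def NR_apow by (auto simp: nrm_def)

lemma PR_intro: "Xv \<in> {0..<int p * int p} \<Longrightarrow> p > 0 \<Longrightarrow>
   inPR (NR (int p) c e) p ((int p * Xv) mod (int p * int p), 0)"
  unfolding inPR_def NR_apow
  by (rule bexI[of _ "(Xv, 0)"]) (auto simp: nrm_def NR_simps)

lemma NR_pow_g: "P > 1 \<Longrightarrow> (g, 0) [^]\<^bsub>NR P 0 e\<^esub> (k::nat) = nrm P (g^k, 0)"
proof (induction k)
  case 0
  then show ?case by (simp add: NR_simps nrm_def less_1_mult)
next
  case (Suc k)
  have "(g, 0) [^]\<^bsub>NR P 0 e\<^esub> Suc k = nrm P (FF P 0 e (nrm P (g^k, 0)) (g, 0))"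
    using Suc by (simp add: NR_mult)
  also have "\<dots> = nrm P (FF P 0 e (g^k, 0) (g, 0))"
    unfolding nrm_eq_iff by (rule eqv_FF[OF eqv_nrm eqv_refl])
  also have "\<dots> = nrm P (g^Suc k, 0)" by (simp add: FF_def algebra_simps)
  finally show ?case .
qed

lemma NR_pow_gen: "P > 1 \<Longrightarrow> \<exists>s. u [^]\<^bsub>NR P 0 e\<^esub> (k::nat) = nrm P (fst u^k, s)"
proof (induction k)
  case 0
  then show ?case by (auto simp: NR_simps nrm_def less_1_mult intro!: exI[of _ 0])
next
  case (Suc k)
  then obtain s where s: "u [^]\<^bsub>NR P 0 e\<^esub> k = nrm P (fst u^k, s)" by blast
  have "u [^]\<^bsub>NR P 0 e\<^esub> Suc k = nrm P (FF P 0 e (nrm P (fst u^k, s)) u)"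
    using s by (simp add: NR_mult)
  also have "\<dots> = nrm P (FF P 0 e (fst u^k, s) u)"
    unfolding nrm_eq_iff by (rule eqv_FF[OF eqv_nrm eqv_refl])
  also have "\<dots> = nrm P (fst u^Suc k, s * fst u + (fst u^k)^e * snd u)" by (simp add: FF_def algebra_simps)
  finally show ?case by blast
qed

lemma Zp_N: assumes pr: "Factorial_Ring.prime (P::int)" and j: "j \<ge> 1" shows "Zp (NR P 0 j)"
  unfolding Zp_def Lset_def NR_L[OF pr disjI1[OF refl]]
proof (intro ballI)
  fix a b assume a: "a \<in> {u \<in> carrier (NR P 0 j). P dvd fst u}" and b: "b \<in> {u \<in> carrier (NR P 0 j). P dvd fst u}"
  have da: "P dvd fst a" using a by blast
  have db: "P dvd fst b" using b by blast
  have d1: "P*P dvd fst a * fst b + P*(0*snd a*snd b)" using mult_dvd_mono[OF da db] by simp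
  obtain m where m: "j = Suc m" using j by (cases j) auto
  have "P dvd fst a ^ j" unfolding m power_Suc using da by (rule dvd_mult2)
  hence d2: "P dvd snd a * fst b + fst a ^ j * snd b" using db by (simp add: dvd_add dvd_mult)
  have "a \<otimes>\<^bsub>NR P 0 j\<^esub> b = ((fst a * fst b + P*(0*snd a*snd b)) mod (P*P), (snd a * fst b + fst a ^ j * snd b) mod P)"
    by (simp only: NR_mult FF_def nrm_def fst_conv snd_conv)
  also have "\<dots> = (0, 0)" using d1 d2 by (simp only: dvd_imp_mod_0)
  finally show "a \<otimes>\<^bsub>NR P 0 j\<^esub> b = \<zero>\<^bsub>NR P 0 j\<^esub>" by (simp only: NR_simps)
qed

lemma t_L: assumes pr: "Factorial_Ring.prime (P::int)" and ce: "c = 0 \<or> e = 1"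
  shows "(0,1) \<in> Lset (NR P c e)"
proof -
  have "P > 1" using pr by (simp add: prime_gt_1_int)
  then show ?thesis unfolding Lset_def NR_L[OF pr ce] by (simp add: NR_simps)
qed

lemma not_Zp_N0: assumes pr: "Factorial_Ring.prime (P::int)" shows "\<not> Zp (NR P 0 0)"
proof
  assume "Zp (NR P 0 0)"
  hence "(0,1) \<otimes>\<^bsub>NR P 0 0\<^esub> (0,1) = \<zero>\<^bsub>NR P 0 0\<^esub>"
    using t_L[OF pr] unfolding Zp_def by blast
  moreover have "P > 1" using pr by (simp add: prime_gt_1_int)
  ultimately show False by (simp add: NR_mult NR_simps FF_def nrm_def)
qed

lemma not_Zp_R: assumes pr: "Factorial_Ring.prime (P::int)" shows "\<not> Zp (NR P 1 1)"
proof
  assume "Zp (NR P 1 1)"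
  hence "(0,1) \<otimes>\<^bsub>NR P 1 1\<^esub> (0,1) = \<zero>\<^bsub>NR P 1 1\<^esub>"
    using t_L[OF pr] unfolding Zp_def by blast
  moreover have "P > 1" using pr by (simp add: prime_gt_1_int)
  moreover have "P < P * P" using calculation(2) by simp
  ultimately show False by (simp add: NR_mult NR_simps FF_def nrm_def)
qed

lemma not_Qp_N0: assumes pr: "Factorial_Ring.prime p" shows "\<not> Qp (NR (int p) 0 0) p"
proof
  have pr': "Factorial_Ring.prime (int p)" using pr by simp
  assume "Qp (NR (int p) 0 0) p"
  hence "inPR (NR (int p) 0 0) p ((0,1) \<otimes>\<^bsub>NR (int p) 0 0\<^esub> (0,1))"
    using t_L[OF pr'] unfolding Qp_def by blast
  hence "snd ((0,1) \<otimes>\<^bsub>NR (int p) 0 0\<^esub> (0,1)) = 0" by (rule PR_snd)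
  moreover have "int p > 1" using pr prime_gt_1_nat by simp
  ultimately show False by (simp add: NR_mult NR_simps FF_def nrm_def)
qed

lemma Qp_R: assumes pr: "Factorial_Ring.prime p" shows "Qp (NR (int p) 1 1) p"
proof -
  have pr': "Factorial_Ring.prime (int p)" using pr by simp
  have p0: "p > 0" using pr prime_gt_0_nat by blast
  show ?thesis unfolding Qp_def Lset_def NR_L[OF pr' disjI2[OF refl]]
  proof (intro ballI)
    fix a b assume a: "a \<in> {u \<in> carrier (NR (int p) 1 1). int p dvd fst u}"
      and b: "b \<in> {u \<in> carrier (NR (int p) 1 1). int p dvd fst u}"
    obtain m where m: "fst a = int p * m" using a by blast
    define Xv where "Xv = (m * fst b + snd a * snd b) mod (int p * int p)"
    have Xv: "Xv \<in> {0..<int p * int p}" using p0 unfolding Xv_def by simp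
    have e0: "fst a * fst b + int p * (1 * snd a * snd b) = int p * (m * fst b + snd a * snd b)"
      unfolding m by (simp add: algebra_simps)
    have e1: "(fst a * fst b + int p * (1 * snd a * snd b)) mod (int p * int p) = (int p * Xv) mod (int p * int p)"
      unfolding e0 Xv_def by (rule mod_mult_right_eq[symmetric])
    have "int p dvd snd a * fst b + fst a ^ 1 * snd b" using a b by simp
    hence e2: "(snd a * fst b + fst a ^ 1 * snd b) mod int p = 0" by simp
    have "a \<otimes>\<^bsub>NR (int p) 1 1\<^esub> b = ((int p * Xv) mod (int p * int p), 0)"
      unfolding NR_mult FF_def nrm_def using e1 e2 by simp
    then show "inPR (NR (int p) 1 1) p (a \<otimes>\<^bsub>NR (int p) 1 1\<^esub> b)"
      using PR_intro[OF Xv p0] by simp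
  qed
qed

lemma Phi_N:
  assumes pr: "Factorial_Ring.prime p" and i: "i \<ge> 1"
  shows "Phi (NR (int p) 0 i) p i"
proof -
  define P where "P = int p"
  have pr': "Factorial_Ring.prime P" using pr unfolding P_def by simp
  have P1: "P > 1" using pr' by (simp add: prime_gt_1_int)
  have p0: "p > 0" using pr prime_gt_0_nat by blast
  show ?thesis unfolding Phi_def Lset_def P_def[symmetric] NR_L[OF pr' disjI1[OF refl]]
  proof (intro ballI)
    fix u n assume u: "u \<in> Units (NR P 0 i)" and n: "n \<in> {u \<in> carrier (NR P 0 i). P dvd fst u}"
    obtain a b where ab: "u = (a,b)" by fastforce
    obtain x y where xy: "n = (x,y)" by fastforce
    obtain m where m: "x = P*m" using n xy by auto
    obtain s where s: "u [^]\<^bsub>NR P 0 i\<^esub> i = nrm P (fst u ^ i, s)" using NR_pow_gen[OF P1] by blast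
    define s1 where "s1 = a^i mod (P*P)"
    define s2 where "s2 = s mod P"
    have us: "u [^]\<^bsub>NR P 0 i\<^esub> i = (s1, s2)" using s unfolding s1_def s2_def by (simp add: ab nrm_def)
    define Xv where "Xv = ((a - s1)*m) mod (P*P)"
    have Xv: "Xv \<in> {0..<int p * int p}" using P1 unfolding Xv_def P_def by simp
    define w where "w = ((P * Xv) mod (P*P), 0::int)"
    have w: "inPR (NR P 0 i) p w" unfolding w_def P_def by (rule PR_intro[OF Xv p0])
    have e1: "n \<otimes>\<^bsub>NR P 0 i\<^esub> (u [^]\<^bsub>NR P 0 i\<^esub> i) \<oplus>\<^bsub>NR P 0 i\<^esub> w =
       nrm P (x*s1 + P*Xv, y*s1 + x^i*s2)"
    proof -
      have "n \<otimes>\<^bsub>NR P 0 i\<^esub> (u [^]\<^bsub>NR P 0 i\<^esub> i) \<oplus>\<^bsub>NR P 0 i\<^esub> w =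
        nrm P (fst (nrm P (x*s1 + P*(0*y*s2), y*s1 + x^i*s2)) + fst w, snd (nrm P (x*s1 + P*(0*y*s2), y*s1 + x^i*s2)) + snd w)"
        unfolding us xy NR_mult NR_add FF_def by simp
      also have "\<dots> = nrm P (x*s1 + P*(0*y*s2) + P*Xv, y*s1 + x^i*s2 + 0)"
        unfolding nrm_eq_iff
        using eqv_add[OF eqv_nrm[of P "(x*s1 + P*(0*y*s2), y*s1 + x^i*s2)"] eqv_nrm[of P "(P*Xv, 0)"]]
        by (simp add: w_def nrm_def)
      finally show ?thesis by simp
    qed
    have c1: "[x*s1 + P*Xv = a*x] (mod P*P)"
    proof -
      have "[Xv = (a - s1)*m] (mod P)" unfolding Xv_def
        by (rule cong_P2_P[OF cong_mod_leftI[OF cong_refl]])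
      hence "[x*s1 + P*Xv = x*s1 + P*((a - s1)*m)] (mod P*P)"
        by (rule cong_add[OF cong_refl cong_P_scale])
      also have "x*s1 + P*((a - s1)*m) = a*x" unfolding m by (simp add: algebra_simps)
      finally show ?thesis .
    qed
    have c2: "[y*s1 + x^i*s2 = b*x + a^i*y] (mod P)"
    proof -
      have "[s1 = a^i] (mod P)" unfolding s1_def by (rule cong_P2_P[OF cong_mod_leftI[OF cong_refl]])
      hence d1: "P dvd s1 - a^i" by (simp add: cong_iff_dvd_diff)
      obtain i' where i': "i = Suc i'" using i by (cases i) auto
      have d2: "P dvd x^i" unfolding i' power_Suc m by simp
      have d3: "P dvd x" unfolding m by simp
      have eq: "y*s1 + x^i*s2 - (b*x + a^i*y) = y*(s1 - a^i) + x^i*s2 - b*x" by (simp add: algebra_simps)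
      have "P dvd y*(s1 - a^i) + x^i*s2 - b*x" using d1 d2 d3 by (simp add: dvd_add dvd_diff dvd_mult)
      hence "P dvd y*s1 + x^i*s2 - (b*x + a^i*y)" by (simp only: eq)
      thus ?thesis by (simp only: cong_iff_dvd_diff)
    qed
    have "u \<otimes>\<^bsub>NR P 0 i\<^esub> n = nrm P (a*x, b*x + a^i*y)"
      unfolding ab xy NR_mult FF_def by simp
    also have "\<dots> = nrm P (x*s1 + P*Xv, y*s1 + x^i*s2)"
      unfolding nrm_eq_iff eqv_def fst_conv snd_conv using c1 c2 by (simp add: cong_sym)
    finally show "\<exists>w. inPR (NR P 0 i) p w \<and> u \<otimes>\<^bsub>NR P 0 i\<^esub> n =
        n \<otimes>\<^bsub>NR P 0 i\<^esub> (u [^]\<^bsub>NR P 0 i\<^esub> i) \<oplus>\<^bsub>NR P 0 i\<^esub> w"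
      using e1 w by (intro exI[of _ w]) simp
  qed
qed

lemma not_Phi_N:
  assumes pr: "Factorial_Ring.prime p" and g: "0 < g" "g < p" and ng: "\<not> [g^i = g^j] (mod p)"
  shows "\<not> Phi (NR (int p) 0 j) p i"
proof
  assume Ph: "Phi (NR (int p) 0 j) p i"
  define P where "P = int p"
  define G where "G = int g"
  have pr': "Factorial_Ring.prime P" using pr unfolding P_def by simp
  have P1: "P > 1" using pr' by (simp add: prime_gt_1_int)
  have GP: "0 < G" "G < P" using g unfolding G_def P_def by auto
  have "P*1 \<le> P*P" using P1 by (intro mult_left_mono) auto
  hence "G < P*P" using GP by linarith
  hence uc: "(G, 0) \<in> carrier (NR P 0 j)" using GP P1 by (simp add: NR_simps)
  have "\<not> P dvd G" using zdvd_not_zless[OF GP] .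
  hence uu: "(G, 0) \<in> Units (NR P 0 j)" using uc NR_Units[OF pr' disjI1[OF refl]] by simp
  have tl: "(0,1) \<in> Lset (NR P 0 j)" by (rule t_L[OF pr' disjI1[OF refl]])
  obtain w where w: "inPR (NR P 0 j) p w"
     "(G,0) \<otimes>\<^bsub>NR P 0 j\<^esub> (0,1) = ((0,1) \<otimes>\<^bsub>NR P 0 j\<^esub> ((G,0) [^]\<^bsub>NR P 0 j\<^esub> i)) \<oplus>\<^bsub>NR P 0 j\<^esub> w"
    using Ph uu tl unfolding Phi_def P_def by blast
  have w0: "snd w = 0" using w(1) unfolding P_def by (rule PR_snd)
  have "snd ((G,0) \<otimes>\<^bsub>NR P 0 j\<^esub> (0,1)) = G^j mod P"
    by (simp add: NR_mult FF_def nrm_def)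
  moreover have "snd (((0,1) \<otimes>\<^bsub>NR P 0 j\<^esub> ((G,0) [^]\<^bsub>NR P 0 j\<^esub> i)) \<oplus>\<^bsub>NR P 0 j\<^esub> w) = G^i mod P"
  proof -
    have "snd ((0,1) \<otimes>\<^bsub>NR P 0 j\<^esub> ((G,0) [^]\<^bsub>NR P 0 j\<^esub> i)) = (G^i mod (P*P)) mod P"
      unfolding NR_pow_g[OF P1] by (simp add: NR_mult FF_def nrm_def)
    also have "\<dots> = G^i mod P" by (simp add: mod_mod_cancel)
    finally show ?thesis using w0 by (simp add: NR_add nrm_def)
  qed
  ultimately have "G^j mod P = G^i mod P" using w(2) by simp
  hence "[int (g^i) = int (g^j)] (mod int p)" unfolding cong_def G_def P_def by simp
  hence "[g^i = g^j] (mod p)" by (simp only: cong_int_iff)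
  thus False using ng by blast
qed

lemma exists_g:
  assumes pr: "Factorial_Ring.prime p" and ij: "1 \<le> i" "i < j" "j \<le> p - 1"
  shows "\<exists>g. 0 < g \<and> g < p \<and> \<not> [g^i = g^j] (mod p)"
proof (rule ccontr)
  assume "\<not> ?thesis"
  hence all: "\<And>g. 0 < g \<Longrightarrow> g < p \<Longrightarrow> [g^i = g^j] (mod p)" by blast
  define d where "d = j - i"
  have d0: "d > 0" "d < p - 1" using ij unfolding d_def by auto
  have sub: "{1..<p} \<subseteq> {x\<in>{..<p}. [x ^ d = 1] (mod p)}"
  proof
    fix g assume g: "g \<in> {1..<p}"
    have cop: "coprime (g^i) p"
    proof -
      have "\<not> p dvd g" using g by (auto dest: dvd_imp_le)
      hence "coprime p g" using pr prime_imp_coprime by blast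
      thus ?thesis by (simp add: coprime_commute)
    qed
    have gj: "g^j = g^i * g^d" using ij unfolding d_def by (simp add: power_add[symmetric])
    have "[g^i = g^j] (mod p)" using all[of g] g by simp
    hence "[g^i * 1 = g^i * g^d] (mod p)" unfolding gj by simp
    hence "[1 = g^d] (mod p)" using cong_mult_lcancel_nat[OF cop] by blast
    thus "g \<in> {x\<in>{..<p}. [x ^ d = 1] (mod p)}" using g by (simp add: cong_sym)
  qed
  have "card {1..<p} \<le> card {x\<in>{..<p}. [x ^ d = 1] (mod p)}"
    by (rule card_mono[OF _ sub]) simp
  also have "\<dots> \<le> d" using roots_mod_prime_bound[OF pr d0(1)] by simp
  finally show False using d0 by simp
qed

lemma inv_eq:
  assumes R: "nearring_1 R" and S: "nearring_1 S" and iso: "nearring_iso R S"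
  shows "(Zp R \<longleftrightarrow> Zp S) \<and> (Qp R k \<longleftrightarrow> Qp S k) \<and> (Phi R k j \<longleftrightarrow> Phi S k j)"
proof -
  obtain f where bij: "bij_betw f (carrier R) (carrier S)" and
    hom: "\<And>x y. x \<in> carrier R \<Longrightarrow> y \<in> carrier R \<Longrightarrow>
       f (x \<oplus>\<^bsub>R\<^esub> y) = f x \<oplus>\<^bsub>S\<^esub> f y \<and> f (x \<otimes>\<^bsub>R\<^esub> y) = f x \<otimes>\<^bsub>S\<^esub> f y"
    using iso unfolding nearring_iso_def by blast
  have iso2: "nearring_iso S R" by (rule nearring_iso_sym[OF R iso])
  obtain g where bij2: "bij_betw g (carrier S) (carrier R)" and
    hom2: "\<And>x y. x \<in> carrier S \<Longrightarrow> y \<in> carrier S \<Longrightarrow>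
       g (x \<oplus>\<^bsub>S\<^esub> y) = g x \<oplus>\<^bsub>R\<^esub> g y \<and> g (x \<otimes>\<^bsub>S\<^esub> y) = g x \<otimes>\<^bsub>R\<^esub> g y"
    using iso2 unfolding nearring_iso_def by blast
  show ?thesis
    using tr_Zp[OF R S bij hom] tr_Qp[OF R S bij hom] tr_Phi[OF R S bij hom]
      tr_Zp[OF S R bij2 hom2] tr_Qp[OF S R bij2 hom2] tr_Phi[OF S R bij2 hom2]
    by blast
qed

definition NN :: "nat \<Rightarrow> nat \<Rightarrow> (int \<times> int) ring" where
  "NN p i = NR (int p) (if i = p then 1 else 0) (if i = p then 1 else i)"

lemma NN_ce: "(if i = p then 1 else 0::int) = 0 \<or> (if i = p then 1 else i) = 1"
  by auto

lemma distinct_lt: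
  assumes pr: "Factorial_Ring.prime p" and ij: "i < j" "j \<le> p"
  shows "(Zp (NN p i) \<noteq> Zp (NN p j)) \<or> (Qp (NN p i) p \<noteq> Qp (NN p j) p) \<or>
         (Phi (NN p i) p i \<noteq> Phi (NN p j) p i)"
proof -
  have pr': "Factorial_Ring.prime (int p)" using pr by simp
  have Ni: "NN p i = NR (int p) 0 i" using ij unfolding NN_def by simp
  show ?thesis
  proof (cases "j = p")
    case True
    hence Nj: "NN p j = NR (int p) 1 1" unfolding NN_def by simp
    show ?thesis
    proof (cases "i = 0")
      case True
      then show ?thesis unfolding Ni Nj using not_Qp_N0[OF pr] Qp_R[OF pr] by simp
    next
      case False
      then show ?thesis unfolding Ni Nj using Zp_N[OF pr', of i] not_Zp_R[OF pr'] by simp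
    qed
  next
    case False
    hence Nj: "NN p j = NR (int p) 0 j" and jp: "j < p" using ij unfolding NN_def by auto
    show ?thesis
    proof (cases "i = 0")
      case True
      then show ?thesis unfolding Ni Nj using Zp_N[OF pr', of j] not_Zp_N0[OF pr'] ij by simp
    next
      case False
      have "1 \<le> i" "j \<le> p - 1" using False jp by auto
      then obtain g where g: "0 < g" "g < p" "\<not> [g^i = g^j] (mod p)"
        using exists_g[OF pr, of i j] ij by blast
      then show ?thesis unfolding Ni Nj using Phi_N[OF pr, of i] not_Phi_N[OF pr g] False by simp
    qed
  qed
qed

theorem theorem3:
  fixes p :: nat
  assumes "Factorial_Ring.prime p"
  shows "\<exists>N :: nat \<Rightarrow> (int \<times> int) ring.
           (\<forall>i\<le>p. local_nearring (N i) \<and>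
              add_monoid (N i) \<cong> DirProd (integer_mod_group (p^2)) (integer_mod_group p)) \<and>
           (\<forall>i\<le>p. \<forall>j\<le>p. i \<noteq> j \<longrightarrow> \<not> nearring_iso (N i) (N j))"
proof (intro exI[of _ "NN p"] conjI allI impI)
  have pr: "Factorial_Ring.prime p" by fact
  have p0: "p > 0" using pr prime_gt_0_nat by blast
  have loc: "local_nearring (NN p i)" for i
    unfolding NN_def by (rule NR_local[OF pr NN_ce])
  have n1: "nearring_1 (NN p i)" for i using loc[of i] unfolding local_nearring_def by blast
  fix i assume i: "i \<le> p"
  show "local_nearring (NN p i)" by (rule loc)
  show "add_monoid (NN p i) \<cong> DirProd (integer_mod_group (p^2)) (integer_mod_group p)"
    unfolding NN_def add_monoid_NR[OF p0] by (rule iso_refl)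
next
  have pr: "Factorial_Ring.prime p" by fact
  have loc: "local_nearring (NN p i)" for i
    unfolding NN_def by (rule NR_local[OF pr NN_ce])
  have n1: "nearring_1 (NN p i)" for i using loc[of i] unfolding local_nearring_def by blast
  fix i j assume i: "i \<le> p" and j: "j \<le> p" and ij: "i \<noteq> j"
  show "\<not> nearring_iso (NN p i) (NN p j)"
  proof
    assume iso: "nearring_iso (NN p i) (NN p j)"
    have e: "(Zp (NN p i) \<longleftrightarrow> Zp (NN p j)) \<and> (Qp (NN p i) p \<longleftrightarrow> Qp (NN p j) p) \<and>
       (Phi (NN p i) p k \<longleftrightarrow> Phi (NN p j) p k)" for k
      by (rule inv_eq[OF n1 n1 iso])
    show False
    proof (cases "i < j")
      case True
      then show False using distinct_lt[OF pr True j] e by blast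
    next
      case False
      hence "j < i" using ij by simp
      then show False using distinct_lt[OF pr _ i] e by blast
    qed
  qed
qed

end
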